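(* For every $0<\varepsilon<\frac{\pi^2}{2}$ and every $x\in\mathbb T^d$, $$\frac{1}{(2\pi\varepsilon)^{d/2}}e^{-\frac{\mathrm{dist}(x,0_d)^2}{2\varepsilon}}\le\mathcal K_\varepsilon(x)\le2^{d+1}e^{5d}\cdot\frac{1}{(2\pi\varepsilon)^{d/2}}e^{-\frac{\mathrm{dist}(x,0_d)^2}{2\varepsilon}}.$$
   Context: $\mathbb T^d=\mathbb R^d/2\pi\mathbb Z^d$ with $\mathrm{dist}(x,y)=\min_{k\in\mathbb Z^d}\|x-y-2\pi k\|$, and $\mathcal K_\varepsilon(x)=(2\pi\varepsilon)^{-d/2}\sum_{k\in\mathbb Z^d}e^{-\|x-2\pi k\|^2/(2\varepsilon)}$ is the Gaussian (heat) kernel on $\mathbb T^d$. *)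

theory Defs
  imports "HOL-Analysis.Analysis"
begin

text \<open>Points of the torus are represented by arbitrary representatives in real^'d;
  lattice points 2 pi k, k in Z^d, are parametrised by k :: int^'d.\<close>

definition lattice_pt :: "int ^ 'd \<Rightarrow> real ^ 'd" where
  "lattice_pt k = (\<chi> i. 2 * pi * of_int (k $ i))"

definition torus_dist :: "real ^ 'd \<Rightarrow> real ^ 'd \<Rightarrow> real" where
  "torus_dist x y = Inf (range (\<lambda>k::int ^ 'd. norm (x - y - lattice_pt k)))"

definition heat_kernel :: "real \<Rightarrow> real ^ 'd \<Rightarrow> real" where
  "heat_kernel eps x =
     (2 * pi * eps) powr (- real CARD('d) / 2) *
     infsum (\<lambda>k::int ^ 'd. exp (- (norm (x - lattice_pt k))\<^sup>2 / (2 * eps))) UNIV"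

end

theory Submission
  imports Defs
begin
lemma geo_nat: "((\<lambda>n::nat. exp (-1::real) ^ n) has_sum (1 / (1 - exp (-1)))) UNIV"
proof (rule sums_nonneg_imp_has_sum)
  show "(\<lambda>n. exp (-1::real) ^ n) sums (1 / (1 - exp (-1)))"
    by (rule geometric_sums) simp
qed simp

lemma expZ: "((\<lambda>m::int. exp (- \<bar>real_of_int m\<bar>)) has_sum ((1 + exp (-1)) / (1 - exp (-1)))) UNIV"
proof -
  have a: "((\<lambda>m::int. exp (- \<bar>real_of_int m\<bar>)) has_sum (1 / (1 - exp (-1)))) (int ` UNIV)"
  proof (subst has_sum_reindex)
    show "inj_on int UNIV" by simp
    have "((\<lambda>m::int. exp (- \<bar>real_of_int m\<bar>)) \<circ> int) = (\<lambda>n. exp (-1) ^ n)"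
      by (auto simp: fun_eq_iff exp_of_nat_mult[symmetric])
    then show "(((\<lambda>m::int. exp (- \<bar>real_of_int m\<bar>)) \<circ> int) has_sum (1 / (1 - exp (-1)))) UNIV"
      using geo_nat by simp
  qed
  have b: "((\<lambda>m::int. exp (- \<bar>real_of_int m\<bar>)) has_sum (exp (-1) * (1 / (1 - exp (-1))))) ((\<lambda>n. - int n - 1) ` UNIV)"
  proof (subst has_sum_reindex)
    show "inj_on (\<lambda>n. - int n - 1) UNIV" by (auto simp: inj_on_def)
    have "((\<lambda>m::int. exp (- \<bar>real_of_int m\<bar>)) \<circ> (\<lambda>n. - int n - 1)) = (\<lambda>n. exp (-1) * exp (-1) ^ n)"
      by (auto simp: fun_eq_iff exp_of_nat_mult[symmetric] exp_add[symmetric] algebra_simps)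
    then show "(((\<lambda>m::int. exp (- \<bar>real_of_int m\<bar>)) \<circ> (\<lambda>n. - int n - 1)) has_sum (exp (-1) * (1 / (1 - exp (-1))))) UNIV"
      using has_sum_cmult_right[OF geo_nat] by simp
  qed
  have U: "int ` UNIV \<union> (\<lambda>n. - int n - 1) ` UNIV = (UNIV :: int set)"
  proof -
    have "m \<in> int ` UNIV \<union> (\<lambda>n. - int n - 1) ` UNIV" for m :: int
    proof (cases "m \<ge> 0")
      case True then show ?thesis by (metis UnI1 nonneg_int_cases rangeI)
    next
      case False
      then have "m = - int (nat (- m - 1)) - 1" by simp
      then show ?thesis by (metis UnI2 rangeI)
    qed
    then show ?thesis by auto
  qed
  have "((\<lambda>m::int. exp (- \<bar>real_of_int m\<bar>)) has_sum (1 / (1 - exp (-1)) + exp (-1) * (1 / (1 - exp (-1))))) UNIV"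
    using has_sum_Un_disjoint[OF a b] U by fastforce
  moreover have "1 / (1 - exp (-1)) + exp (-1) * (1 / (1 - exp (-1::real))) = (1 + exp (-1)) / (1 - exp (-1))"
    by (simp add: field_simps)
  ultimately show ?thesis by simp
qed

lemma expZ_le: "(1 + exp (-1)) / (1 - exp (-1::real)) \<le> 3"
proof -
  have "exp (-1::real) \<le> 1/2"
  proof -
    have "2 \<le> exp (1::real)" using exp_ge_add_one_self[of 1] by simp
    then show ?thesis by (simp add: exp_minus field_simps)
  qed
  moreover have "exp (-1::real) < 1" by simp
  ultimately show ?thesis by (simp add: field_simps)
qed

lemma expZ_shift: "((\<lambda>n::int. exp (- \<bar>real_of_int (n - c)\<bar>)) has_sum ((1 + exp (-1)) / (1 - exp (-1)))) UNIV"
proof -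
  have "bij_betw (\<lambda>n::int. n - c) UNIV UNIV"
    by (rule bij_betwI[where g = "\<lambda>n. n + c"]) auto
  from has_sum_reindex_bij_betw[OF this, of "\<lambda>m::int. exp (- \<bar>real_of_int m\<bar>)"] expZ
  show ?thesis by simp
qed

definition cz :: "real \<Rightarrow> real" where "cz y = y - 2 * pi * of_int (round (y / (2 * pi)))"

lemma cz_bound: "\<bar>cz y\<bar> \<le> pi"
proof -
  have "\<bar>y / (2*pi) - of_int (round (y / (2 * pi)))\<bar> \<le> 1/2"
    using of_int_round_ge[of "y/(2*pi)"] of_int_round_le[of "y/(2*pi)"] by linarith
  then have "\<bar>2*pi\<bar> * \<bar>y / (2*pi) - of_int (round (y / (2 * pi)))\<bar> \<le> pi"
    using pi_gt_zero by (simp add: field_simps)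
  then have "\<bar>2*pi * (y / (2*pi) - of_int (round (y / (2 * pi))))\<bar> \<le> pi"
    by (simp only: abs_mult)
  then show ?thesis unfolding cz_def using pi_gt_zero by (simp add: algebra_simps)
qed

lemma sq_key:
  fixes z :: real and m :: int
  assumes "\<bar>z\<bar> \<le> pi"
  shows "(z - 2*pi*m)\<^sup>2 \<ge> z\<^sup>2 + 4 * pi\<^sup>2 * (real_of_int m ^ 2 - \<bar>real_of_int m\<bar>)"
proof -
  have "\<bar>m * z\<bar> \<le> \<bar>m\<bar> * pi" using assms by (simp add: abs_mult mult_left_mono)
  then have "m * z \<le> \<bar>m\<bar> * pi" by linarith
  then have "4*pi*(m*z) \<le> 4*pi*(\<bar>m\<bar> * pi)" using pi_gt_zero by simp
  then show ?thesis by (simp add: power2_eq_square algebra_simps)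
qed

lemma int_sq: "real_of_int m ^ 2 - \<bar>real_of_int m\<bar> \<ge> \<bar>real_of_int m\<bar> - 1"
  "real_of_int m ^ 2 - \<bar>real_of_int m\<bar> \<ge> 0"
proof -
  define a where "a = \<bar>real_of_int m\<bar>"
  have sq: "real_of_int m ^ 2 = a * a" unfolding a_def by (simp add: power2_eq_square abs_mult_self_eq)
  have "(a - 1) * (a - 1) \<ge> 0" by simp
  then have "a * a - a \<ge> a - 1" by (simp add: algebra_simps)
  then show "real_of_int m ^ 2 - \<bar>real_of_int m\<bar> \<ge> \<bar>real_of_int m\<bar> - 1"
    unfolding sq a_def[symmetric] .
  have "m = 0 \<or> \<bar>m\<bar> \<ge> 1" by linarith
  then have "a = 0 \<or> a \<ge> 1" unfolding a_def by (metis abs_zero of_int_0 of_int_abs of_int_le_iff of_int_1)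
  then have "a * a \<ge> a" proof
    assume "a \<ge> 1" then show ?thesis using mult_left_mono[of 1 a a] by simp
  qed simp
  then show "real_of_int m ^ 2 - \<bar>real_of_int m\<bar> \<ge> 0" unfolding sq a_def[symmetric] by simp
qed

lemma term_bounds:
  fixes eps y :: real and n :: int
  assumes e: "0 < eps" "eps < pi\<^sup>2 / 2"
  shows "exp (- (y - 2*pi*n)\<^sup>2 / (2*eps)) \<le> exp (- (cz y)\<^sup>2 / (2*eps)) * exp 1 * exp (- \<bar>real_of_int (n - round (y / (2 * pi)))\<bar>)"
proof -
  define m where "m = n - round (y / (2 * pi))"
  have yz: "y - 2*pi*n = cz y - 2*pi*m" unfolding cz_def m_def by (simp add: algebra_simps)
  have sq: "(y - 2*pi*n)\<^sup>2 \<ge> (cz y)\<^sup>2 + 4 * pi\<^sup>2 * (real_of_int m ^ 2 - \<bar>real_of_int m\<bar>)"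
    unfolding yz by (rule sq_key[OF cz_bound])
  have c1: "4 * pi\<^sup>2 / (2*eps) \<ge> 1" using e by (simp add: field_simps)
  have "4 * pi\<^sup>2 * (real_of_int m ^ 2 - \<bar>real_of_int m\<bar>) / (2*eps)
     = (4 * pi\<^sup>2 / (2*eps)) * (real_of_int m ^ 2 - \<bar>real_of_int m\<bar>)" by simp
  also have "\<dots> \<ge> 1 * (real_of_int m ^ 2 - \<bar>real_of_int m\<bar>)"
    by (rule mult_right_mono[OF c1 int_sq(2)])
  finally have "4 * pi\<^sup>2 * (real_of_int m ^ 2 - \<bar>real_of_int m\<bar>) / (2*eps) \<ge> \<bar>real_of_int m\<bar> - 1"
    using int_sq(1)[of m] by (simp only: mult_1)
  moreover have "(y - 2*pi*n)\<^sup>2 / (2*eps) \<ge> ((cz y)\<^sup>2 + 4 * pi\<^sup>2 * (real_of_int m ^ 2 - \<bar>real_of_int m\<bar>)) / (2*eps)"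
    using sq e by (simp add: divide_right_mono)
  ultimately have "- (y - 2*pi*n)\<^sup>2 / (2*eps) \<le> - (cz y)\<^sup>2 / (2*eps) + 1 + - \<bar>real_of_int m\<bar>"
    by (simp add: add_divide_distrib)
  then have "exp (- (y - 2*pi*n)\<^sup>2 / (2*eps)) \<le> exp (- (cz y)\<^sup>2 / (2*eps) + 1 + - \<bar>real_of_int m\<bar>)"
    by simp
  also have "\<dots> = exp (- (cz y)\<^sup>2 / (2*eps)) * exp 1 * exp (- \<bar>real_of_int m\<bar>)"
    by (simp only: exp_add)
  finally show ?thesis by (simp add: m_def)
qed

lemma term_ge:
  fixes y :: real and n :: int
  shows "(cz y)\<^sup>2 \<le> (y - 2*pi*n)\<^sup>2"
proof -
  define m where "m = n - round (y / (2 * pi))"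
  have yz: "y - 2*pi*n = cz y - 2*pi*m" unfolding cz_def m_def by (simp add: algebra_simps)
  have "4 * pi\<^sup>2 * (real_of_int m ^ 2 - \<bar>real_of_int m\<bar>) \<ge> 0" using int_sq(2)[of m] by simp
  then show ?thesis unfolding yz using sq_key[OF cz_bound, of y m] by linarith
qed

lemma oneD:
  fixes eps y :: real
  assumes e: "0 < eps" "eps < pi\<^sup>2 / 2"
  defines "f \<equiv> (\<lambda>n::int. exp (- (y - 2*pi*n)\<^sup>2 / (2*eps)))"
  shows "(\<lambda>n. norm (f n)) summable_on UNIV"
    and "exp (- (cz y)\<^sup>2 / (2*eps)) \<le> infsum f UNIV"
    and "infsum f UNIV \<le> 9 * exp (- (cz y)\<^sup>2 / (2*eps))"
proof -
  define C where "C = exp (- (cz y)\<^sup>2 / (2*eps)) * exp 1"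
  define g where "g = (\<lambda>n::int. C * exp (- \<bar>real_of_int (n - round (y / (2 * pi)))\<bar>))"
  have gs: "(g has_sum (C * ((1 + exp (-1)) / (1 - exp (-1))))) UNIV"
    unfolding g_def by (rule has_sum_cmult_right[OF expZ_shift])
  have fg: "f n \<le> g n" for n unfolding f_def g_def C_def using term_bounds[OF e] by simp
  have f0: "f n \<ge> 0" for n unfolding f_def by simp
  have fs: "f summable_on UNIV"
    using summable_on_comparison_test[of g UNIV f] gs fg f0 by (auto simp: summable_on_def)
  then show "(\<lambda>n. norm (f n)) summable_on UNIV" using f0 by simp
  have "infsum f UNIV \<le> C * ((1 + exp (-1)) / (1 - exp (-1)))"
    using has_sum_mono[OF has_sum_infsum[OF fs] gs] fg by blast
  also have "\<dots> \<le> C * 3" by (rule mult_left_mono[OF expZ_le]) (simp add: C_def)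
  also have "\<dots> \<le> 9 * exp (- (cz y)\<^sup>2 / (2*eps))"
  proof -
    have "exp (1::real) \<le> 3" using exp_le by simp
    then show ?thesis unfolding C_def by (simp add: mult_left_mono)
  qed
  finally show "infsum f UNIV \<le> 9 * exp (- (cz y)\<^sup>2 / (2*eps))" .
  have "f (round (y / (2 * pi))) = exp (- (cz y)\<^sup>2 / (2*eps))" unfolding f_def cz_def by simp
  moreover have "sum f {round (y / (2 * pi))} \<le> infsum f UNIV"
    by (rule finite_sum_le_infsum[OF fs]) (auto simp: f0)
  ultimately show "exp (- (cz y)\<^sup>2 / (2*eps)) \<le> infsum f UNIV" by simp
qed

lemma norm_sq_vec: "(norm (v :: real ^ 'd))\<^sup>2 = (\<Sum>i\<in>UNIV. (v $ i)\<^sup>2)"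
  by (simp add: norm_vec_def L2_set_def sum_nonneg)

lemma norm_lat: "(norm (x - lattice_pt k))\<^sup>2 = (\<Sum>i\<in>UNIV. (x $ i - 2 * pi * of_int (k $ i))\<^sup>2)"
  by (simp add: norm_sq_vec lattice_pt_def)

lemma exp_lat:
  "exp (- (norm (x - lattice_pt k))\<^sup>2 / (2 * eps)) =
    (\<Prod>i\<in>UNIV. exp (- (x $ i - 2 * pi * of_int (k $ i))\<^sup>2 / (2 * eps)))"
proof -
  have "- (norm (x - lattice_pt k))\<^sup>2 / (2 * eps) = (\<Sum>i\<in>UNIV. - (x $ i - 2 * pi * of_int (k $ i))\<^sup>2 / (2 * eps))"
    by (simp add: norm_lat sum_divide_distrib sum_negf)
  then show ?thesis by (simp add: exp_sum)
qed

lemma torus_dist_eq: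
  fixes x :: "real ^ 'd"
  shows "(torus_dist x 0)\<^sup>2 = (\<Sum>i\<in>UNIV. (cz (x $ i))\<^sup>2)"
proof -
  define k0 :: "int ^ 'd" where "k0 = (\<chi> i. round (x $ i / (2 * pi)))"
  have e0: "(norm (x - lattice_pt k0))\<^sup>2 = (\<Sum>i\<in>UNIV. (cz (x $ i))\<^sup>2)"
    unfolding norm_lat k0_def cz_def by simp
  have le: "norm (x - lattice_pt k0) \<le> norm (x - lattice_pt k)" for k
  proof -
    have "(norm (x - lattice_pt k0))\<^sup>2 \<le> (norm (x - lattice_pt k))\<^sup>2"
    proof (unfold norm_lat, rule sum_mono)
      fix i
      have "x $ i - 2 * pi * of_int (k0 $ i) = cz (x $ i)" by (simp add: k0_def cz_def)
      then show "(x $ i - 2 * pi * of_int (k0 $ i))\<^sup>2 \<le> (x $ i - 2 * pi * of_int (k $ i))\<^sup>2"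
        using term_ge by simp
    qed
    then show ?thesis by (simp add: power2_le_iff_abs_le)
  qed
  have "torus_dist x 0 = norm (x - lattice_pt k0)"
    unfolding torus_dist_def
    by (rule cInf_eq_minimum) (auto simp: le)
  then show ?thesis using e0 by simp
qed

lemma heat_prod:
  fixes x :: "real ^ 'd"
  assumes e: "0 < eps" "eps < pi\<^sup>2 / 2"
  shows "infsum (\<lambda>k::int ^ 'd. exp (- (norm (x - lattice_pt k))\<^sup>2 / (2 * eps))) UNIV
     = (\<Prod>i\<in>UNIV. infsum (\<lambda>n::int. exp (- (x $ i - 2 * pi * of_int n)\<^sup>2 / (2 * eps))) UNIV)"
proof -
  define F where "F i n = exp (- (x $ i - 2 * pi * of_int n)\<^sup>2 / (2 * eps))" for i n
  have bij: "bij_betw vec_lambda (PiE UNIV (\<lambda>_::'d. UNIV :: int set)) (UNIV :: (int^'d) set)"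
    unfolding PiE_UNIV by (rule bij_betwI[where g = vec_nth]) auto
  have "infsum (\<lambda>k::int ^ 'd. exp (- (norm (x - lattice_pt k))\<^sup>2 / (2 * eps))) UNIV
      = infsum (\<lambda>k::int ^ 'd. \<Prod>i\<in>UNIV. F i (k $ i)) UNIV"
    by (simp only: exp_lat F_def)
  also have "\<dots> = infsum (\<lambda>g. \<Prod>i\<in>UNIV. F i (g i)) (PiE UNIV (\<lambda>_::'d. UNIV :: int set))"
    using infsum_reindex_bij_betw[OF bij, of "\<lambda>k::int ^ 'd. \<Prod>i\<in>UNIV. F i (k $ i)"] by simp
  also have "\<dots> = (\<Prod>i\<in>UNIV. infsum (F i) UNIV)"
  proof (rule infsum_prod_PiE_abs)
    fix i :: 'd
    show "(\<lambda>n. norm (F i n)) summable_on UNIV"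
      unfolding F_def using oneD(1)[OF e, of "x $ i"] by simp
  qed simp
  finally show ?thesis unfolding F_def by simp
qed

theorem propositionC1:
  fixes eps :: real and x :: "real ^ 'd"
  assumes "0 < eps" and "eps < pi\<^sup>2 / 2"
  shows "1 / (2 * pi * eps) powr (real CARD('d) / 2) * exp (- (torus_dist x 0)\<^sup>2 / (2 * eps))
           \<le> heat_kernel eps x
       \<and> heat_kernel eps x
           \<le> 2 ^ (CARD('d) + 1) * exp (5 * real CARD('d)) *
              (1 / (2 * pi * eps) powr (real CARD('d) / 2) * exp (- (torus_dist x 0)\<^sup>2 / (2 * eps)))"
proof -
  note e = assms
  define S where "S i = infsum (\<lambda>n::int. exp (- (x $ i - 2 * pi * of_int n)\<^sup>2 / (2 * eps))) UNIV" for i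
  define E where "E i = exp (- (cz (x $ i))\<^sup>2 / (2 * eps))" for i
  define P where "P = 1 / (2 * pi * eps) powr (real CARD('d) / 2)"
  have P0: "P \<ge> 0" unfolding P_def by simp
  have hk: "heat_kernel eps x = P * (\<Prod>i\<in>UNIV. S i)"
    unfolding heat_kernel_def heat_prod[OF e] P_def S_def
    by (simp add: powr_minus_divide)
  have ED: "exp (- (torus_dist x 0)\<^sup>2 / (2 * eps)) = (\<Prod>i\<in>UNIV. E i)"
  proof -
    have "- (torus_dist x 0)\<^sup>2 / (2 * eps) = (\<Sum>i\<in>UNIV. - (cz (x $ i))\<^sup>2 / (2 * eps))"
      by (simp add: torus_dist_eq sum_divide_distrib sum_negf)
    then show ?thesis by (simp add: exp_sum E_def)
  qed
  have lo: "(\<Prod>i\<in>UNIV. E i) \<le> (\<Prod>i\<in>UNIV. S i)"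
  proof (rule prod_mono)
    fix i :: 'd
    show "0 \<le> E i \<and> E i \<le> S i" unfolding E_def S_def using oneD(2)[OF e, of "x $ i"] by simp
  qed
  have hi: "(\<Prod>i\<in>UNIV. S i) \<le> (\<Prod>i\<in>UNIV. 9 * E i)"
  proof (rule prod_mono)
    fix i :: 'd
    have "0 \<le> E i" unfolding E_def by simp
    then have "0 \<le> S i" unfolding S_def E_def using oneD(2)[OF e, of "x $ i"] by linarith
    then show "0 \<le> S i \<and> S i \<le> 9 * E i"
      unfolding S_def E_def using oneD(3)[OF e, of "x $ i"] by simp
  qed
  have c: "(9::real) ^ CARD('d) \<le> 2 ^ (CARD('d) + 1) * exp (5 * real CARD('d))"
  proof -
    have "(9::real) \<le> 2 * exp 5"
    proof -
      have "(1::real) + 5 \<le> exp 5" by (rule exp_ge_add_one_self)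
      then show ?thesis by simp
    qed
    then have "(9::real) ^ CARD('d) \<le> (2 * exp 5) ^ CARD('d)" by (rule power_mono) simp
    also have "\<dots> = 2 ^ CARD('d) * exp (5 * real CARD('d))"
      by (simp add: power_mult_distrib exp_of_nat_mult[symmetric] mult.commute)
    also have "\<dots> \<le> 2 ^ (CARD('d) + 1) * exp (5 * real CARD('d))" by simp
    finally show ?thesis .
  qed
  have pe: "(\<Prod>i\<in>UNIV. 9 * E i) = 9 ^ CARD('d) * (\<Prod>i\<in>UNIV. E i)"
    by (simp add: prod.distrib)
  have Epos: "(\<Prod>i\<in>UNIV. E i) \<ge> 0" unfolding E_def by (simp add: prod_nonneg)
  show ?thesis
  proof
    show "1 / (2 * pi * eps) powr (real CARD('d) / 2) * exp (- (torus_dist x 0)\<^sup>2 / (2 * eps)) \<le> heat_kernel eps x"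
      unfolding hk ED P_def[symmetric] using lo P0 by (simp add: mult_left_mono)
    have "P * (\<Prod>i\<in>UNIV. S i) \<le> P * (9 ^ CARD('d) * (\<Prod>i\<in>UNIV. E i))"
      using hi pe P0 by (simp add: mult_left_mono)
    also have "\<dots> \<le> P * (2 ^ (CARD('d) + 1) * exp (5 * real CARD('d)) * (\<Prod>i\<in>UNIV. E i))"
      using c Epos P0 by (simp add: mult_left_mono mult_right_mono)
    finally show "heat_kernel eps x \<le> 2 ^ (CARD('d) + 1) * exp (5 * real CARD('d)) *
              (1 / (2 * pi * eps) powr (real CARD('d) / 2) * exp (- (torus_dist x 0)\<^sup>2 / (2 * eps)))"
      unfolding hk ED P_def[symmetric] by (simp add: algebra_simps)
  qed
qed

end
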